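(* Let $R$ be an associative ring with identity, and let $a,b,c,d\in R$ satisfy $bdb=bac$ and $dbd=acd$. If $ac\in R^{D}$, then $bd\in R^{D}$, $(bd)^{D}=b\big((ac)^{D}\big)^2d$, and $i(bd)\le i(ac)+1$.
   Context: For $x\in R$, $\mathrm{comm}(x)=\{y\in R : xy=yx\}$ and $\mathrm{comm}^2(x)=\{y\in R : yz=zy \text{ for all } z\in\mathrm{comm}(x)\}$. An element $x\in R$ has a Drazin inverse if there is $y\in R$ with $y=yxy$, $y\in\mathrm{comm}^2(x)$ and $x-x^2y$ nilpotent; such $y$ is unique and denoted $x^D$; $R^D$ is the set of such $x$. The (Drazin) index $i(x)$ is the smallest $k\ge 0$ with $x^k=x^{k+1}x^D$. *)

theory Defs
  imports Main
begin

definition comm :: "'a::ring_1 \<Rightarrow> 'a set" where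
  "comm x = {y. x * y = y * x}"

definition comm2 :: "'a::ring_1 \<Rightarrow> 'a set" where
  "comm2 x = {y. \<forall>z\<in>comm x. y * z = z * y}"

definition is_drazin_inv :: "'a::ring_1 \<Rightarrow> 'a \<Rightarrow> bool" where
  "is_drazin_inv x y \<longleftrightarrow> y = y * x * y \<and> y \<in> comm2 x \<and> (\<exists>n. (x - x^2 * y) ^ n = 0)"

definition drazin_set :: "'a::ring_1 set" where
  "drazin_set = {x. \<exists>y. is_drazin_inv x y}"

definition drazin :: "'a::ring_1 \<Rightarrow> 'a" where
  "drazin x = (THE y. is_drazin_inv x y)"

definition drazin_index :: "'a::ring_1 \<Rightarrow> nat" where
  "drazin_index x = (LEAST k. x ^ k = x ^ (k + 1) * drazin x)"

end

theory Submission
  imports Defs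
begin

lemma dz_comm:
  fixes x z :: "'a::ring_1"
  assumes "is_drazin_inv x z" shows "x * z = z * x"
  using assms unfolding is_drazin_inv_def comm2_def comm_def by auto

lemma nil_pow:
  fixes y w :: "'a::ring_1"
  assumes c: "y * w = w * y" and i: "w * y * w = w"
  shows "(y - y^2 * w) ^ Suc n = y ^ Suc n - y ^ Suc (Suc n) * w"
proof (induction n)
  case 0
  then show ?case by (simp add: power2_eq_square)
next
  case (Suc n)
  have e: "w * (y * (y * w)) = y * w"
    by (metis c i mult.assoc)
  have "(y - y^2 * w) ^ Suc (Suc n) = (y ^ Suc n - y ^ Suc (Suc n) * w) * (y - y^2 * w)"
    using Suc by (simp only: power_Suc2[of _ "Suc n"])
  also have "\<dots> = y ^ Suc n * y - y ^ Suc n * (y * (y * w)) - y ^ Suc (Suc n) * (w * y)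
      + y ^ Suc (Suc n) * (w * (y * (y * w)))"
    by (simp add: algebra_simps power2_eq_square)
  also have "\<dots> = y ^ Suc n * y - y ^ Suc n * (y * (y * w))"
    unfolding e c[symmetric] by simp
  also have "\<dots> = y ^ Suc (Suc n) - y ^ Suc (Suc (Suc n)) * w"
    by (simp only: power_Suc2 mult.assoc)
  finally show ?case .
qed

lemma pow_of_nil:
  fixes x z :: "'a::ring_1"
  assumes "is_drazin_inv x z" shows "\<exists>k. x ^ k = x ^ Suc k * z"
proof -
  from assms obtain n where n: "(x - x^2 * z) ^ n = 0" and i: "z = z * x * z"
    unfolding is_drazin_inv_def by auto
  have c: "x * z = z * x" using dz_comm[OF assms] .
  show ?thesis
  proof (cases n)
    case 0
    then have "(1::'a) = 0" using n by simp
    then have "\<And>u::'a. u = 0" by (metis mult_1 mult_zero_left)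
    then show ?thesis by metis
  next
    case (Suc m)
    have "(x - x^2 * z) ^ Suc m = 0" using n Suc by simp
    then have "x ^ Suc m - x ^ Suc (Suc m) * z = 0"
      by (simp only: nil_pow[OF c i[symmetric]])
    then have "x ^ Suc m = x ^ Suc (Suc m) * z" by (simp only: right_minus_eq)
    then show ?thesis by blast
  qed
qed

lemma pow_mono:
  fixes x z :: "'a::ring_1"
  assumes "x ^ k = x ^ Suc k * z" shows "x ^ (k + j) = x ^ Suc (k + j) * z"
proof (induction j)
  case 0 then show ?case using assms by simp
next
  case (Suc j)
  have "x ^ (k + Suc j) = x * x ^ (k + j)" by simp
  also have "\<dots> = x * x ^ Suc (k + j) * z" using Suc by (simp add: mult.assoc)
  finally show ?case by simp
qed

lemma w_pow:
  fixes y w :: "'a::ring_1"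
  assumes c: "y * w = w * y" and i: "w * y * w = w"
  shows "w = w ^ Suc n * y ^ n"
proof (induction n)
  case 0 then show ?case by simp
next
  case (Suc n)
  have "w ^ Suc (Suc n) * y ^ Suc n = w * (w ^ Suc n * y ^ n) * y"
    by (simp only: power_Suc[of w "Suc n"] power_Suc2[of y n] mult.assoc)
  also have "\<dots> = w * w * y" using Suc by simp
  also have "\<dots> = w" using c i by (metis mult.assoc)
  finally show ?case by simp
qed

lemma comm2_suff:
  fixes y w :: "'a::ring_1"
  assumes c: "y * w = w * y" and i: "w * y * w = w" and k: "y ^ k = y ^ Suc k * w"
  shows "w \<in> comm2 y"
  unfolding comm2_def comm_def
proof (intro CollectI ballI)
  fix t assume "t \<in> {t. y * t = t * y}"
  then have ty: "y * t = t * y" by simp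
  define m where "m = Suc k"
  define e where "e = w * y"
  have ym: "y ^ m = y ^ Suc m * w" unfolding m_def using pow_mono[OF k, of 1] by (simp only: Suc_eq_plus1)
  have "w = w ^ Suc k * y ^ k" using w_pow[OF c i] .
  then have "e = w ^ Suc k * y ^ k * y" unfolding e_def by simp
  then have e1: "e = w ^ m * y ^ m" unfolding m_def by (simp only: power_Suc2[of y k] mult.assoc)
  have wy: "w ^ m * y = y * w ^ m" using power_commuting_commutes[of w y m] c by simp
  have e2: "e = y ^ m * w ^ m" using e1 power_commuting_commutes[OF wy[symmetric], of m] by simp
  have tym: "y ^ m * t = t * y ^ m" using power_commuting_commutes[OF ty] .
  have eym: "e * y ^ m = y ^ m"
  proof -
    have "e * y ^ m = w * y ^ Suc m" unfolding e_def by (simp add: mult.assoc)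
    also have "\<dots> = y ^ Suc m * w" using power_commuting_commutes[of y w "Suc m"] c by simp
    finally show ?thesis by (simp only: ym[symmetric])
  qed
  have yme: "y ^ m * e = y ^ m"
  proof -
    have "y ^ m * e = y ^ m * y * w" unfolding e_def using c by (simp add: mult.assoc)
    also have "\<dots> = y ^ Suc m * w" by (simp only: power_Suc2[of y m])
    finally show ?thesis by (simp only: ym[symmetric])
  qed
  have A: "e * t * e = t * e"
  proof -
    have "t * e = y ^ m * t * w ^ m" unfolding e2 using tym by (simp add: mult.assoc)
    moreover have "e * (y ^ m * t * w ^ m) = y ^ m * t * w ^ m" using eym by (simp add: mult.assoc[symmetric])
    ultimately show ?thesis by (simp add: mult.assoc)
  qed
  have B: "e * t * e = e * t"
  proof -
    have "e * t = w ^ m * t * y ^ m" unfolding e1 using tym by (simp add: mult.assoc)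
    moreover have "w ^ m * t * y ^ m * e = w ^ m * t * y ^ m" using yme by (simp add: mult.assoc)
    ultimately show ?thesis by simp
  qed
  have et: "e * t = t * e" using A B by simp
  have we: "w * e = w" unfolding e_def using i c by (metis mult.assoc)
  have "w * t = w * e * t" using we by simp
  also have "\<dots> = w * t * e" using et by (simp add: mult.assoc)
  also have "\<dots> = w * y * t * w" unfolding e_def using ty c by (metis mult.assoc)
  also have "\<dots> = t * e * w" using et unfolding e_def by (simp add: mult.assoc)
  also have "\<dots> = t * w" unfolding e_def using i by (simp add: mult.assoc)
  finally show "w * t = t * w" .
qed

lemma drazin_unique:
  fixes x z1 z2 :: "'a::ring_1"
  assumes d1: "is_drazin_inv x z1" and d2: "is_drazin_inv x z2"
  shows "z1 = z2"
proof -
  obtain k1 where k1: "x ^ k1 = x ^ Suc k1 * z1" using pow_of_nil[OF d1] by blast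
  obtain k2 where k2: "x ^ k2 = x ^ Suc k2 * z2" using pow_of_nil[OF d2] by blast
  define k where "k = k1 + k2"
  have a1: "x ^ k = x ^ Suc k * z1" using pow_mono[OF k1, of k2] by (simp add: k_def)
  have a2: "x ^ k = x ^ Suc k * z2" using pow_mono[OF k2, of k1] by (simp add: k_def add.commute)
  have c1: "x * z1 = z1 * x" using dz_comm[OF d1] .
  have c2: "x * z2 = z2 * x" using dz_comm[OF d2] .
  have i1: "z1 * x * z1 = z1" using d1 unfolding is_drazin_inv_def by simp
  have i2: "z2 * x * z2 = z2" using d2 unfolding is_drazin_inv_def by simp
  have W: "z1 ^ Suc k * x ^ k = z1" using w_pow[OF c1 i1, of k] by simp
  have A': "x ^ k = x ^ k * x * z2" using a2 by (simp only: power_Suc2[of x k])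
  have "z1 = z1 ^ Suc k * x ^ k" using W by simp
  also have "\<dots> = z1 ^ Suc k * (x ^ k * x * z2)" using arg_cong[of _ _ "\<lambda>u. z1 ^ Suc k * u", OF A'] .
  also have "\<dots> = (z1 ^ Suc k * x ^ k) * x * z2" by (simp only: mult.assoc)
  also have "\<dots> = z1 * x * z2" by (simp only: W)
  finally have e1: "z1 = z1 * x * z2" .
  have W: "z2 ^ Suc k * x ^ k = z2" using w_pow[OF c2 i2, of k] by simp
  have A': "x ^ k = x ^ k * x * z1" using a1 by (simp only: power_Suc2[of x k])
  have "z2 = z2 ^ Suc k * x ^ k" using W by simp
  also have "\<dots> = z2 ^ Suc k * (x ^ k * x * z1)" using arg_cong[of _ _ "\<lambda>u. z2 ^ Suc k * u", OF A'] .
  also have "\<dots> = (z2 ^ Suc k * x ^ k) * x * z1" by (simp only: mult.assoc)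
  also have "\<dots> = z2 * x * z1" by (simp only: W)
  finally have e2: "z2 = z2 * x * z1" .
  have "z2 \<in> comm x" using c2 unfolding comm_def by simp
  then have c12: "z1 * z2 = z2 * z1" using d1 unfolding is_drazin_inv_def comm2_def by auto
  have "z1 * x * z2 = x * (z1 * z2)" using c1 by (metis mult.assoc)
  also have "\<dots> = x * (z2 * z1)" using c12 by simp
  also have "\<dots> = z2 * x * z1" using c2 by (metis mult.assoc)
  finally show ?thesis using e1 e2 by simp
qed

lemma drazin_eq:
  fixes x z :: "'a::ring_1"
  assumes "is_drazin_inv x z" shows "drazin x = z"
  unfolding drazin_def using assms drazin_unique by blast

theorem theorem3p4:
  fixes a b c d :: "'a::ring_1"
  assumes "b * d * b = b * a * c"
    and "d * b * d = a * c * d"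
    and "a * c \<in> drazin_set"
  shows "b * d \<in> drazin_set
    \<and> drazin (b * d) = b * (drazin (a * c))^2 * d
    \<and> drazin_index (b * d) \<le> drazin_index (a * c) + 1"
proof -
  define x where "x = a * c"
  define y where "y = b * d"
  define z where "z = drazin x"
  from assms(3) obtain z0 where D0: "is_drazin_inv x z0" unfolding drazin_set_def x_def by auto
  have D: "is_drazin_inv x z" using drazin_eq[OF D0] D0 z_def by simp
  have cx: "x * z = z * x" using dz_comm[OF D] .
  have iz: "z * x * z = z" using D unfolding is_drazin_inv_def by simp
  define k where "k = drazin_index x"
  have K: "x ^ k = x ^ (k + 1) * z"
    unfolding k_def drazin_index_def z_def
    by (rule LeastI_ex) (use pow_of_nil[OF D] in \<open>simp add: z_def\<close>)
  have R1: "\<And>t. b * (d * (b * t)) = b * (x * t)"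
    using assms(1) unfolding x_def by (metis mult.assoc)
  have R2: "\<And>t. d * (b * (d * t)) = x * (d * t)"
    using assms(2) unfolding x_def by (metis mult.assoc)
  have R2': "d * (b * d) = x * d"
    using assms(2) unfolding x_def by (metis mult.assoc)
  have xu: "x * (d * b) = (d * b) * x"
  proof -
    have "x * (d * b) = d * b * d * b" using assms(2) unfolding x_def by (metis mult.assoc)
    also have "\<dots> = d * b * x" using assms(1) unfolding x_def by (metis mult.assoc)
    finally show ?thesis .
  qed
  have "d * b \<in> comm x" using xu unfolding comm_def by simp
  then have zu: "z * (d * b) = (d * b) * z" using D unfolding is_drazin_inv_def comm2_def by auto
  have Rzu: "\<And>t. z * (d * (b * t)) = d * (b * (z * t))" using zu by (metis mult.assoc)
  have zzx: "z * z * x = z" using iz cx by (metis mult.assoc)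
  have xzz: "x * z * z = z" using iz cx by (metis mult.assoc)
  have Rzzx: "\<And>t. z * (z * (x * t)) = z * t" using zzx by (metis mult.assoc)
  have Rxzz: "\<And>t. x * (z * (z * t)) = z * t" using xzz by (metis mult.assoc)
  have Rxz: "\<And>t. x ^ Suc k * (z * t) = x ^ k * t" using K by (metis Suc_eq_plus1 mult.assoc)
  have Rxk: "\<And>t. x * (x ^ k * t) = x ^ Suc k * t" by (simp add: mult.assoc)
  have Rxu: "\<And>t n. x ^ n * (d * (b * t)) = d * (b * (x ^ n * t))"
  proof -
    fix t n
    have "x ^ n * (d * b) = (d * b) * x ^ n" using power_commuting_commutes[OF xu] .
    then show "x ^ n * (d * (b * t)) = d * (b * (x ^ n * t))" by (metis mult.assoc)
  qed
  have ypow: "\<And>n. y ^ Suc n = b * (x ^ n * d)"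
  proof -
    fix n show "y ^ Suc n = b * (x ^ n * d)"
    proof (induction n)
      case 0 then show ?case by (simp add: y_def)
    next
      case (Suc n)
      have "y ^ Suc (Suc n) = y ^ Suc n * y" by (rule power_Suc2)
      also have "\<dots> = b * (x ^ n * (d * (b * d)))" using Suc by (simp add: y_def mult.assoc)
      also have "\<dots> = b * ((x ^ n * x) * d)" by (simp only: R2' mult.assoc)
      also have "\<dots> = b * (x ^ Suc n * d)" by (simp only: power_Suc2)
      finally show ?case .
    qed
  qed
  define w where "w = b * z ^ 2 * d"
  have w': "w = b * (z * (z * d))" unfolding w_def by (simp add: power2_eq_square mult.assoc)
  have c: "y * w = w * y"
  proof -
    have "y * w = b * (z * d)" unfolding w' y_def by (simp only: mult.assoc R1 Rxzz)
    moreover have "w * y = b * (z * d)" unfolding w' y_def by (simp only: mult.assoc R2' Rzzx)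
    ultimately show ?thesis by simp
  qed
  have i: "w * y * w = w"
    unfolding w' y_def by (simp only: mult.assoc R2' Rzzx Rzu R1 Rxzz)
  have p: "y ^ Suc k = y ^ Suc (Suc k) * w"
  proof -
    have "y ^ Suc (Suc k) * w = b * (x ^ Suc k * (d * (b * (z * (z * d)))))"
      unfolding w' ypow by (simp only: mult.assoc)
    also have "\<dots> = b * (x ^ k * d)"
      by (simp only: Rxu Rxz R1 Rxk)
    finally show ?thesis by (simp only: ypow[of k])
  qed
  have cm: "w \<in> comm2 y" using comm2_suff[OF c i p] .
  have nl: "(y - y^2 * w) ^ Suc (Suc k) = 0"
  proof -
    have "y ^ Suc (Suc k) = y ^ Suc (Suc (Suc k)) * w" using pow_mono[OF p, of 1] by (simp only: Suc_eq_plus1)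
    then show ?thesis by (simp only: nil_pow[OF c i] right_minus_eq)
  qed
  have DY: "is_drazin_inv y w" unfolding is_drazin_inv_def using i cm nl by metis
  have dy: "drazin y = w" using drazin_eq[OF DY] .
  have idx: "drazin_index y \<le> k + 1"
    unfolding drazin_index_def dy by (rule Least_le) (use p in simp)
  show ?thesis
    using DY dy idx unfolding drazin_set_def x_def y_def z_def w_def k_def by auto
qed

end
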